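(* Let $A_1,A_2,A_3\in\mathbb{R}^n_s$ be three distinct points lying on a gyrocircle in the Einstein gyrovector space $\mathbb{R}^n_s$, such that the gyrosecant gyroline through $A_2,A_3$ and the gyrotangent gyroline of the gyrocircle with tangency point $A_1$ share a point $P$ not on the gyrocircle. Let $d_k=\|\ominus A_k\oplus P\|$ for $k=1,2,3$ and $d_{23}=\|\ominus A_2\oplus A_3\|$ (when $A_2$ lies between $P$ and $A_3$, one has $d_{23}=d_3\ominus d_2$, where for reals $a\ominus b=(a-b)/(1-ab/s^2)$). Then $$\gamma_{d_1}^2d_1^2=\frac{2}{\gamma_{d_{23}}+1}\,\gamma_{d_2}d_2\,\gamma_{d_3}d_3 .$$
   Context: Fix $s>0$, $n\ge2$; $\mathbb{R}^n_s=\{v\in\mathbb{R}^n:\|v\|<s\}$ with Einstein addition $u\oplus v=\frac{1}{1+u\cdot v/s^2}\{u+\frac{1}{\gamma_u}v+\frac{1}{s^2}\frac{\gamma_u}{1+\gamma_u}(u\cdot v)u\}$, $\gamma_v=(1-\|v\|^2/s^2)^{-1/2}$ and for real $0\le a<s$, $\gamma_a=(1-a^2/s^2)^{-1/2}$; $\ominus v=-v$. Gyrodistance between $A,B$: $\|\ominus A\oplus B\|$. Gyrolines are intersections of Euclidean lines with the ball. A gyroplane is $(A_1\oplus\mathrm{span}\{\ominus A_1\oplus A_2,\ominus A_1\oplus A_3\})\cap\mathbb{R}^n_s$ for $\ominus A_1\oplus A_2,\ominus A_1\oplus A_3$ linearly independent; a gyrocircle with gyrocenter $O$ and gyroradius $r>0$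 is the set of points of a gyroplane containing $O$ at gyrodistance $r$ from $O$. A gyrosecant gyroline meets the gyrocircle in two different points; a gyrotangent gyroline is a gyroline in the gyroplane of the gyrocircle meeting it in exactly one point (the tangency point). *)

theory Defs
  imports "HOL-Analysis.Analysis"
begin

definition ball_s :: "real \<Rightarrow> (real^'n) set" where
  "ball_s s = {v. norm v < s}"

definition gam :: "real \<Rightarrow> real^'n \<Rightarrow> real" where
  "gam s v = 1 / sqrt (1 - (norm v)^2 / s^2)"

definition gamr :: "real \<Rightarrow> real \<Rightarrow> real" where
  "gamr s a = 1 / sqrt (1 - a^2 / s^2)"

definition ein_add :: "real \<Rightarrow> real^'n \<Rightarrow> real^'n \<Rightarrow> real^'n" where
  "ein_add s u v = (1 / (1 + (u \<bullet> v) / s^2)) *\<^sub>R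
     (u + (1 / gam s u) *\<^sub>R v + ((1 / s^2) * (gam s u / (1 + gam s u)) * (u \<bullet> v)) *\<^sub>R u)"

definition gyrodist :: "real \<Rightarrow> real^'n \<Rightarrow> real^'n \<Rightarrow> real" where
  "gyrodist s A B = norm (ein_add s (- A) B)"

definition is_gyroline :: "real \<Rightarrow> (real^'n) set \<Rightarrow> bool" where
  "is_gyroline s L \<longleftrightarrow> (\<exists>a d. d \<noteq> 0 \<and> L = {a + t *\<^sub>R d | t. True} \<inter> ball_s s \<and> L \<noteq> {})"

definition gyroline_through :: "real \<Rightarrow> real^'n \<Rightarrow> real^'n \<Rightarrow> (real^'n) set" where
  "gyroline_through s A B = {A + t *\<^sub>R (B - A) | t. True} \<inter> ball_s s"

definition gyroplane :: "real \<Rightarrow> real^'n \<Rightarrow> real^'n \<Rightarrow> real^'n \<Rightarrow> (real^'n) set" where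
  "gyroplane s A1 A2 A3 =
     {ein_add s A1 x | x. x \<in> span {ein_add s (- A1) A2, ein_add s (- A1) A3}} \<inter> ball_s s"

definition is_gyroplane :: "real \<Rightarrow> (real^'n) set \<Rightarrow> bool" where
  "is_gyroplane s Pl \<longleftrightarrow> (\<exists>A1 A2 A3. A1 \<in> ball_s s \<and> A2 \<in> ball_s s \<and> A3 \<in> ball_s s \<and>
      ein_add s (- A1) A2 \<noteq> ein_add s (- A1) A3 \<and>
      independent {ein_add s (- A1) A2, ein_add s (- A1) A3} \<and> Pl = gyroplane s A1 A2 A3)"

definition gyrocircle :: "real \<Rightarrow> (real^'n) set \<Rightarrow> real^'n \<Rightarrow> real \<Rightarrow> (real^'n) set" where
  "gyrocircle s Pl Oc r = {X \<in> Pl. gyrodist s Oc X = r}"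

end

theory Submission
  imports Defs
begin

definition lift :: "real \<Rightarrow> real^'n \<Rightarrow> real \<times> (real^'n)" where
  "lift s X = (gam s X, gam s X *\<^sub>R X)"

definition mk :: "real \<Rightarrow> real \<times> (real^'n) \<Rightarrow> real \<times> (real^'n) \<Rightarrow> real" where
  "mk s x y = fst x * fst y - (snd x \<bullet> snd y) / s^2"

lemma mk_add1: "mk s (x + y) z = mk s x z + mk s y z"
  by (simp add: mk_def inner_add_left algebra_simps add_divide_distrib)
lemma mk_add2: "mk s z (x + y) = mk s z x + mk s z y"
  by (simp add: mk_def inner_add_right algebra_simps add_divide_distrib)
lemma mk_scale1: "mk s (c *\<^sub>R x) z = c * mk s x z"
  by (simp add: mk_def algebra_simps)
lemma mk_scale2: "mk s z (c *\<^sub>R x) = c * mk s z x"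
  by (simp add: mk_def algebra_simps)
lemma mk_sym: "mk s x y = mk s y x"
  by (simp add: mk_def inner_commute mult.commute)

lemma gam_facts:
  assumes "s > 0" "norm X < s"
  shows "gam s X > 0" "(gam s X)^2 * (1 - (norm X)^2/s^2) = 1" "1 - (norm X)^2/s^2 > 0"
proof -
  have ns: "(norm X)^2 < s^2" using assms by (simp add: power_strict_mono)
  then show q: "1 - (norm X)^2/s^2 > 0" using assms by (simp add: field_simps)
  then show "gam s X > 0" by (simp add: gam_def)
  have "(sqrt (1 - (norm X)^2/s^2))^2 = 1 - (norm X)^2/s^2" using q by simp
  then show "(gam s X)^2 * (1 - (norm X)^2/s^2) = 1" using q ns
    by (simp add: gam_def power_divide)
qed

lemma mk_lift: "mk s (lift s X) (lift s Y) = gam s X * gam s Y * (1 - (X \<bullet> Y)/s^2)"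
  by (simp add: mk_def lift_def algebra_simps)

lemma mk_self:
  assumes "s > 0" "norm X < s"
  shows "mk s (lift s X) (lift s X) = 1"
  using gam_facts(2)[OF assms] by (simp add: mk_lift power2_norm_eq_inner[symmetric] power2_eq_square)

lemma key:
  assumes s: "s > 0" and X: "norm X < s" and Y: "norm Y < s"
  shows "mk s (lift s X) (lift s Y) > 0"
    "1 - (gyrodist s X Y)^2/s^2 = 1/(mk s (lift s X) (lift s Y))^2"
proof -
  define a where "a = - X"
  define g where "g = gam s a"
  define h where "h = gam s Y"
  define p where "p = a \<bullet> Y"
  define x where "x = a \<bullet> a"
  define y where "y = Y \<bullet> Y"
  define D where "D = 1 + p / s^2"
  have na: "norm a < s" using X by (simp add: a_def)
  have g0: "g > 0" and g2: "g^2 * (1 - x/s^2) = 1"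
    using gam_facts[OF s na] by (auto simp: g_def x_def power2_norm_eq_inner)
  have h0: "h > 0" and h2: "h^2 * (1 - y/s^2) = 1"
    using gam_facts[OF s Y] by (auto simp: h_def y_def power2_norm_eq_inner)
  have "\<bar>p\<bar> \<le> norm a * norm Y" unfolding p_def by (rule Cauchy_Schwarz_ineq2)
  also have "\<dots> < s * s" using na Y by (simp add: mult_strict_mono')
  finally have "\<bar>p\<bar> < s^2" by (simp add: power2_eq_square)
  hence D0: "D > 0" using s by (simp add: D_def field_simps abs_less_iff)
  have gX: "gam s X = g" by (simp add: g_def a_def gam_def)
  have mkv: "mk s (lift s X) (lift s Y) = g * h * D"
    by (simp add: mk_lift gX h_def D_def p_def a_def) 
  show "mk s (lift s X) (lift s Y) > 0" using g0 h0 D0 mkv by simp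
  define k where "k = (1 / s^2) * (g / (1 + g))"
  define w where "w = a + (1 / g) *\<^sub>R Y + (k * p) *\<^sub>R a"
  have ea: "ein_add s (- X) Y = (1 / D) *\<^sub>R w"
    by (simp add: ein_add_def w_def k_def D_def p_def g_def a_def)
  have ww: "w \<bullet> w = x + 2*p/g + 2*k*p*x + y/g^2 + 2*k*p^2/g + k^2*p^2*x"
    by (simp add: w_def inner_add_left inner_add_right inner_commute x_def y_def p_def
        algebra_simps power2_eq_square)
  have kx: "k * x = (g - 1)/g"
  proof -
    have e: "g^2 * x = s^2 * (g^2 - 1)" using g2 g0 s by (simp add: field_simps)
    have "k * x = (g^2 * x) / (g * s^2 * (1 + g))"
      unfolding k_def using g0 s by (simp add: divide_simps) (simp add: algebra_simps power2_eq_square)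
    also have "\<dots> = s^2 * ((g - 1) * (g + 1)) / (g * s^2 * (1 + g))" unfolding e by (simp add: algebra_simps power2_eq_square)
    also have "\<dots> = (g - 1)/g"
    proof -
      have nz: "s^2 * (1 + g) \<noteq> 0" using g0 s by auto
      have "s^2 * ((g - 1) * (g + 1)) / (g * s^2 * (1 + g)) = ((g - 1) * (s^2 * (1 + g))) / (g * (s^2 * (1 + g)))"
        by (simp add: algebra_simps)
      also have "\<dots> = (g - 1) / g" by (rule mult_divide_mult_cancel_right[OF nz])
      finally show ?thesis .
    qed
    finally show ?thesis .
  qed
  have ww2: "w \<bullet> w = x + y/g^2 + 2*p + p^2/s^2"
  proof -
    have "w \<bullet> w = x + y/g^2 + 2*p/g + 2*p*(k*x) + p^2*(2*k/g + k*(k*x))"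
      unfolding ww by (simp add: algebra_simps power2_eq_square)
    also have "\<dots> = x + y/g^2 + 2*p + p^2/s^2"
    proof -
      have ng: "1 + g \<noteq> 0" using g0 by simp
      have kg: "k * (1 + g) = g / s^2" unfolding k_def using ng by simp
      have "2*k/g + k*((g - 1)/g) = (k * (1 + g)) / g" using g0 by (simp add: field_simps)
      also have "\<dots> = 1 / s^2" using kg g0 by simp
      finally have e: "2*k/g + k*((g - 1)/g) = 1 / s^2" .
      have e2: "2*p*((g - 1)/g) + 2*p/g = 2*p" using g0 by (simp add: field_simps)
      show ?thesis unfolding kx e using e2 by simp
    qed
    finally show ?thesis .
  qed
  have nd: "(gyrodist s X Y)^2 = (w \<bullet> w) / D^2"
    by (simp add: gyrodist_def ea power2_norm_eq_inner power_divide)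
  have sx: "s^2 - x = s^2 / g^2" using g2 g0 s by (simp add: field_simps)
  have sy: "s^2 - y = s^2 / h^2" using h2 h0 s by (simp add: field_simps)
  have "1 - (gyrodist s X Y)^2/s^2 = (s^2*D^2 - w \<bullet> w)/(s^2*D^2)"
    using D0 s by (simp add: nd field_simps)
  also have "s^2*D^2 - w \<bullet> w = (s^2 - x) - y/g^2"
    unfolding ww2 D_def using s by (simp add: field_simps power2_eq_square)
  also have "\<dots> = s^2/(g^2*h^2)"
    using g0 h0 sx sy s by (simp add: field_simps)
  also have "s^2/(g^2*h^2) / (s^2*D^2) = 1/(g*h*D)^2"
    using g0 h0 s D0 by (simp add: field_simps power2_eq_square)
  finally show "1 - (gyrodist s X Y)^2/s^2 = 1/(mk s (lift s X) (lift s Y))^2"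
    using mkv by simp
qed

lemma second_point:
  assumes s: "s > 0" and Oc: "norm Oc < s" and A: "norm A < s" and P: "norm P < s"
    and AP: "A \<noteq> P" and rho: "\<rho> > 0" and v: "v \<noteq> 0"
    and w: "w = u *\<^sub>R lift s A + v *\<^sub>R lift s P"
    and eq: "(mk s (lift s Oc) w)^2 = \<rho>^2 * mk s w w"
  shows "\<exists>\<tau>. \<tau> \<noteq> 0 \<and> norm (A + \<tau> *\<^sub>R (P - A)) < s \<and>
           mk s (lift s Oc) (lift s (A + \<tau> *\<^sub>R (P - A))) = \<rho>"
proof -
  define w0 where "w0 = fst w"
  define wv where "wv = snd w"
  define gA where "gA = gam s A"
  define gP where "gP = gam s P"
  define gO where "gO = gam s Oc"
  have gP0: "gP > 0" using gam_facts[OF s P] by (simp add: gP_def)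
  have gO0: "gO > 0" using gam_facts[OF s Oc] by (simp add: gO_def)
  have w0e: "w0 = u * gA + v * gP" by (simp add: w0_def w lift_def gA_def gP_def)
  have wve: "wv = (u * gA) *\<^sub>R A + (v * gP) *\<^sub>R P" by (simp add: wv_def w lift_def gA_def gP_def)
  have mkww: "mk s w w = w0^2 - (wv \<bullet> wv)/s^2"
    by (simp add: mk_def w0_def wv_def power2_eq_square)
  have mkOw: "mk s (lift s Oc) w = gO * (w0 - (Oc \<bullet> wv)/s^2)"
    by (simp add: mk_def lift_def w0_def wv_def gO_def algebra_simps)
  have "\<rho>^2 * mk s w w \<ge> 0" using eq[symmetric] by simp
  hence mkw0: "mk s w w \<ge> 0" using rho by (simp add: zero_le_mult_iff)
  have w00: "w0 \<noteq> 0"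
  proof
    assume z: "w0 = 0"
    have "wv \<bullet> wv / s^2 \<le> 0" using mkw0 z s by (simp add: mkww)
    hence "wv \<bullet> wv \<le> 0" using s by (simp add: divide_le_0_iff)
    hence "wv = 0" by (metis inner_ge_zero inner_eq_zero_iff order_antisym)
    moreover have "wv = (v * gP) *\<^sub>R (P - A)"
    proof -
      have "u * gA = - (v * gP)" using z w0e by simp
      thus ?thesis unfolding wve by (simp add: algebra_simps)
    qed
    ultimately show False using v gP0 AP by simp
  qed
  define \<tau> where "\<tau> = v * gP/w0"
  define Q where "Q = A + \<tau> *\<^sub>R (P - A)"
  have wvQ: "wv = w0 *\<^sub>R Q"
  proof -
    have "w0 * \<tau> = v * gP" using w00 by (simp add: \<tau>_def)
    hence "w0 *\<^sub>R Q = w0 *\<^sub>R A + (v * gP) *\<^sub>R (P - A)"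
      by (simp add: Q_def scaleR_add_right)
    also have "\<dots> = wv" unfolding wve w0e by (simp add: algebra_simps)
    finally show ?thesis by simp
  qed
  have mkww2: "mk s w w = w0^2 * (1 - (Q \<bullet> Q)/s^2)"
    unfolding mkww wvQ by (simp add: algebra_simps power2_eq_square)
  have nQ: "norm Q < s"
  proof (rule ccontr)
    assume "\<not> norm Q < s"
    hence nq: "norm Q \<ge> s" by simp
    hence "(norm Q)^2 \<ge> s^2" using s by (simp add: power_mono)
    hence QQ: "Q \<bullet> Q \<ge> s^2" by (simp add: power2_norm_eq_inner)
    have "1 - (Q \<bullet> Q)/s^2 \<le> 0" using QQ s by (simp add: field_simps)
    hence "mk s w w \<le> 0" unfolding mkww2 by (simp add: mult_nonneg_nonpos)
    hence m0: "mk s w w = 0" using mkw0 by simp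
    hence "mk s (lift s Oc) w = 0" using eq by simp
    hence "w0 - (Oc \<bullet> wv)/s^2 = 0" using gO0 unfolding mkOw by simp
    hence "w0 * (1 - (Oc \<bullet> Q)/s^2) = 0" unfolding wvQ by (simp add: algebra_simps)
    hence OQ: "Oc \<bullet> Q = s^2" using w00 s by simp
    have "\<bar>Oc \<bullet> Q\<bar> \<le> norm Oc * norm Q" by (rule Cauchy_Schwarz_ineq2)
    also have "\<dots> < s * norm Q" using Oc nq s by (intro mult_strict_right_mono) auto
    finally have "s^2 < s * norm Q" using OQ by simp
    moreover have "Q \<bullet> Q = s^2" using m0 w00 s unfolding mkww2 by simp
    hence "norm Q = s" using s by (metis norm_eq_sqrt_inner real_sqrt_abs abs_of_pos)
    ultimately show False by (simp add: power2_eq_square)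
  qed
  define gQ where "gQ = gam s Q"
  have gQ2: "gQ^2 * (1 - (Q \<bullet> Q)/s^2) = 1"
    using gam_facts(2)[OF s nQ] by (simp add: gQ_def power2_norm_eq_inner)
  have liftQ: "lift s Q = (gQ / w0) *\<^sub>R w"
  proof -
    have "w = (w0, w0 *\<^sub>R Q)" using wvQ unfolding w0_def wv_def by (metis prod.collapse)
    thus ?thesis using w00 by (simp add: lift_def gQ_def)
  qed
  have MOQ: "mk s (lift s Oc) (lift s Q) = (gQ / w0) * mk s (lift s Oc) w"
    unfolding liftQ by (rule mk_scale2)
  have "(mk s (lift s Oc) (lift s Q))^2 = (gQ/w0)^2 * (\<rho>^2 * (w0^2 * (1 - (Q \<bullet> Q)/s^2)))"
    unfolding MOQ power_mult_distrib eq mkww2 by simp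
  also have "\<dots> = \<rho>^2 * (gQ^2 * (1 - (Q \<bullet> Q)/s^2))"
    using w00 by (simp add: power_divide field_simps)
  also have "\<dots> = \<rho>^2" using gQ2 by simp
  finally have sq: "(mk s (lift s Oc) (lift s Q))^2 = \<rho>^2" .
  have pos: "mk s (lift s Oc) (lift s Q) > 0" using key(1)[OF s Oc nQ] .
  have "mk s (lift s Oc) (lift s Q) = \<rho>"
    using sq pos rho by (metis power2_eq_imp_eq less_imp_le)
  moreover have "\<tau> \<noteq> 0" using v gP0 w00 by (simp add: \<tau>_def)
  ultimately show ?thesis using nQ unfolding Q_def by blast
qed

lemma dist_facts:
  assumes s: "s > 0" and X: "norm X < s" and Y: "norm Y < s"
  defines "M \<equiv> mk s (lift s X) (lift s Y)" and "d \<equiv> gyrodist s X Y"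
  shows "gamr s d = M" "M \<ge> 1" "gamr s d * d = s * sqrt (M^2 - 1)"
    "(gamr s d)^2 * d^2 = s^2 * (M^2 - 1)"
proof -
  have M0: "M > 0" using key(1)[OF s X Y] by (simp add: M_def)
  have e: "1 - d^2/s^2 = 1/M^2" using key(2)[OF s X Y] by (simp add: M_def d_def)
  show g: "gamr s d = M" unfolding gamr_def e using M0 by (simp add: real_sqrt_divide)
  have d0: "d \<ge> 0" by (simp add: d_def gyrodist_def)
  have "d^2/s^2 \<ge> 0" by simp
  hence "1/M^2 \<le> 1" using e by linarith
  hence "1 \<le> M^2" using M0 by (simp add: field_simps)
  thus M1: "M \<ge> 1" using M0 by (metis abs_of_pos real_sqrt_le_mono real_sqrt_one real_sqrt_abs)
  have dd: "d^2 = s^2 * (1 - 1/M^2)" using e s by (simp add: field_simps)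
  have "(M * d)^2 = s^2 * (M^2 - 1)" unfolding power_mult_distrib dd using M0 by (simp add: field_simps)
  thus "(gamr s d)^2 * d^2 = s^2 * (M^2 - 1)" using g by (simp add: power_mult_distrib)
  have "M * d = sqrt ((M * d)^2)" using M0 d0 by simp
  also have "\<dots> = s * sqrt (M^2 - 1)" using \<open>(M * d)^2 = _\<close> s by (simp add: real_sqrt_mult)
  finally show "gamr s d * d = s * sqrt (M^2 - 1)" using g by simp
qed

theorem mainTheorem4:
  fixes s :: real and Pl :: "(real^'n) set" and Oc A1 A2 A3 P :: "real^'n"
    and r :: real and T :: "(real^'n) set"
  assumes "CARD('n) \<ge> 2" and "s > 0"
    and "is_gyroplane s Pl" and "Oc \<in> Pl" and "r > 0"
    and "A1 \<in> gyrocircle s Pl Oc r" and "A2 \<in> gyrocircle s Pl Oc r" and "A3 \<in> gyrocircle s Pl Oc r"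
    and "A1 \<noteq> A2" and "A1 \<noteq> A3" and "A2 \<noteq> A3"
    and "is_gyroline s T" and "T \<subseteq> Pl" and "T \<inter> gyrocircle s Pl Oc r = {A1}"
    and "P \<in> T" and "P \<in> gyroline_through s A2 A3" and "P \<notin> gyrocircle s Pl Oc r"
  shows "(gamr s (gyrodist s A1 P))^2 * (gyrodist s A1 P)^2 =
         2 / (gamr s (gyrodist s A2 A3) + 1) *
         (gamr s (gyrodist s A2 P) * gyrodist s A2 P) *
         (gamr s (gyrodist s A3 P) * gyrodist s A3 P)"
proof -
  note assms' = assms
  have s: "s > 0" by (rule assms(2))
  have Plb: "\<And>X. X \<in> Pl \<Longrightarrow> norm X < s"
    using assms(3) unfolding is_gyroplane_def gyroplane_def ball_s_def by auto
  have A1: "A1 \<in> Pl" "gyrodist s Oc A1 = r" using assms(6) by (auto simp: gyrocircle_def)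
  have A2: "A2 \<in> Pl" "gyrodist s Oc A2 = r" using assms(7) by (auto simp: gyrocircle_def)
  have A3: "A3 \<in> Pl" "gyrodist s Oc A3 = r" using assms(8) by (auto simp: gyrocircle_def)
  have nO: "norm Oc < s" using Plb assms(4) by blast
  have n1: "norm A1 < s" using Plb A1 by blast
  have n2: "norm A2 < s" using Plb A2 by blast
  have n3: "norm A3 < s" using Plb A3 by blast
  obtain t where Pt: "P = A2 + t *\<^sub>R (A3 - A2)" and nP: "norm P < s"
    using assms(16) unfolding gyroline_through_def ball_s_def by auto
  obtain a dd where Tdef: "T = {a + \<tau> *\<^sub>R dd | \<tau>. True} \<inter> ball_s s"
    using assms(12) unfolding is_gyroline_def by blast
  have A1T: "A1 \<in> T" using assms(14) by blast
  have PA1: "P \<noteq> A1" using assms(6,17) by blast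
  define M :: "real^'n \<Rightarrow> real^'n \<Rightarrow> real" where "M = (\<lambda>X Y. mk s (lift s X) (lift s Y))"
  define \<rho> where "\<rho> = M Oc A1"
  have rho0: "\<rho> > 0" using key(1)[OF s nO n1] by (simp add: \<rho>_def M_def)
  have er: "1 - r^2/s^2 = 1/\<rho>^2" using key(2)[OF s nO n1] A1 by (simp add: \<rho>_def M_def)
  have circ: "M Oc X = \<rho>" if X: "norm X < s" and dX: "gyrodist s Oc X = r" for X
  proof -
    have "1/(M Oc X)^2 = 1/\<rho>^2" using key(2)[OF s nO X] dX er by (simp add: M_def)
    hence "(M Oc X)^2 = \<rho>^2" by simp
    moreover have "M Oc X > 0" using key(1)[OF s nO X] by (simp add: M_def)
    ultimately show ?thesis using rho0 by (metis power2_eq_imp_eq less_imp_le)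
  qed
  have O2: "M Oc A2 = \<rho>" using circ n2 A2 by blast
  have O3: "M Oc A3 = \<rho>" using circ n3 A3 by blast
  have self: "M X X = 1" if "norm X < s" for X using mk_self[OF s that] by (simp add: M_def)
  have sym: "M X Y = M Y X" for X Y by (simp add: M_def mk_sym)
  define gP where "gP = gam s P"
  define \<alpha> where "\<alpha> = gP * (1 - t) / gam s A2"
  define \<beta> where "\<beta> = gP * t / gam s A3"
  have g2: "gam s A2 > 0" using gam_facts(1)[OF s n2] .
  have g3: "gam s A3 > 0" using gam_facts(1)[OF s n3] .
  have liftP: "lift s P = \<alpha> *\<^sub>R lift s A2 + \<beta> *\<^sub>R lift s A3"
  proof -
    have a2: "\<alpha> * gam s A2 = gP * (1 - t)" using g2 by (simp add: \<alpha>_def)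
    have b3: "\<beta> * gam s A3 = gP * t" using g3 by (simp add: \<beta>_def)
    have f: "\<alpha> * gam s A2 + \<beta> * gam s A3 = gP" unfolding a2 b3 by (simp add: algebra_simps)
    have "(\<alpha> * gam s A2) *\<^sub>R A2 + (\<beta> * gam s A3) *\<^sub>R A3 = gP *\<^sub>R P"
      unfolding a2 b3 Pt by (simp add: algebra_simps)
    thus ?thesis using f by (simp add: lift_def gP_def)
  qed
  define c where "c = M A2 A3"
  have MXP: "M X P = \<alpha> * M X A2 + \<beta> * M X A3" for X
    unfolding M_def liftP by (simp add: mk_add2 mk_scale2)
  have C2: "M A2 P = \<alpha> + \<beta> * c" using MXP[of A2] self[OF n2] by (simp add: c_def)
  have C3: "M A3 P = \<alpha> * c + \<beta>" using MXP[of A3] self[OF n3] sym[of A3 A2] by (simp add: c_def)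
  have PP: "1 = \<alpha>^2 + \<beta>^2 + 2 * \<alpha> * \<beta> * c"
  proof -
    have "1 = M P P" using self[OF nP] by simp
    also have "\<dots> = \<alpha> * M P A2 + \<beta> * M P A3" by (rule MXP)
    also have "\<dots> = \<alpha> * (\<alpha> + \<beta> * c) + \<beta> * (\<alpha> * c + \<beta>)"
      using C2 C3 sym[of P A2] sym[of P A3] by simp
    finally show ?thesis by (simp add: algebra_simps power2_eq_square)
  qed
  define q where "q = M Oc P"
  have qe: "q = (\<alpha> + \<beta>) * \<rho>" using MXP[of Oc] O2 O3 by (simp add: q_def algebra_simps)
  define C1 where "C1 = M A1 P"
  define K where "K = \<rho> * (q - \<rho> * C1)"
  define L where "L = q^2 - \<rho>^2"
  have K0: "K = 0"
  proof (rule ccontr)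
    assume K: "K \<noteq> 0"
    define w where "w = L *\<^sub>R lift s A1 + (- 2 * K) *\<^sub>R lift s P"
    have v: "- 2 * K \<noteq> 0" using K by simp
    have mOw: "mk s (lift s Oc) w = L * \<rho> + (- 2 * K) * q"
      unfolding w_def mk_add2 mk_scale2 by (simp add: \<rho>_def q_def M_def)
    have mww: "mk s w w = L^2 + 4 * K^2 - 4 * L * K * C1"
    proof -
      have "mk s w w = L * (L * M A1 A1 + (- 2 * K) * M P A1) + (- 2 * K) * (L * M A1 P + (- 2 * K) * M P P)"
        unfolding w_def mk_add1 mk_add2 mk_scale1 mk_scale2 by (simp add: M_def)
      thus ?thesis using self[OF n1] self[OF nP] sym[of P A1]
        by (simp add: C1_def algebra_simps power2_eq_square)
    qed
    have eq: "(mk s (lift s Oc) w)^2 = \<rho>^2 * mk s w w"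
      unfolding mOw mww by (simp add: K_def L_def algebra_simps power2_eq_square)
    obtain \<tau> where tau: "\<tau> \<noteq> 0" and nQ: "norm (A1 + \<tau> *\<^sub>R (P - A1)) < s"
      and MQ: "mk s (lift s Oc) (lift s (A1 + \<tau> *\<^sub>R (P - A1))) = \<rho>"
      using second_point[OF s nO n1 nP PA1[symmetric] rho0 v w_def eq] by blast
    define Q where "Q = A1 + \<tau> *\<^sub>R (P - A1)"
    obtain t1 where t1: "A1 = a + t1 *\<^sub>R dd" using A1T Tdef by blast
    obtain t2 where t2: "P = a + t2 *\<^sub>R dd" using assms(15) Tdef by blast
    have "Q = a + (t1 + \<tau> * (t2 - t1)) *\<^sub>R dd"
      unfolding Q_def t1 t2 by (simp add: algebra_simps)
    hence QT: "Q \<in> T" using nQ Tdef by (auto simp: Q_def ball_s_def)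
    hence QPl: "Q \<in> Pl" using assms(13) by blast
    have "1 - (gyrodist s Oc Q)^2/s^2 = 1/\<rho>^2"
      using key(2)[OF s nO nQ] MQ by (simp add: Q_def)
    hence "(gyrodist s Oc Q)^2 = r^2" using er s by (simp add: field_simps)
    hence "gyrodist s Oc Q = r" using assms(5)
      by (metis power2_eq_imp_eq less_imp_le norm_ge_zero gyrodist_def)
    hence "Q \<in> gyrocircle s Pl Oc r" using QPl by (simp add: gyrocircle_def)
    hence "Q = A1" using QT assms(14) by blast
    hence "\<tau> *\<^sub>R (P - A1) = 0" by (simp add: Q_def)
    thus False using tau PA1 by simp
  qed
  have C1e: "C1 = \<alpha> + \<beta>"
  proof -
    have "q = \<rho> * C1" using K0 rho0 by (simp add: K_def)
    thus ?thesis using qe rho0 by simp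
  qed
  have LHS: "(gamr s (gyrodist s A1 P))^2 * (gyrodist s A1 P)^2 = s^2 * (C1^2 - 1)"
    using dist_facts(4)[OF s n1 nP] by (simp add: C1_def M_def)
  have C1ge: "C1 \<ge> 1" using dist_facts(2)[OF s n1 nP] by (simp add: C1_def M_def)
  have ceq: "gamr s (gyrodist s A2 A3) = c" using dist_facts(1)[OF s n2 n3] by (simp add: c_def M_def)
  have c1: "c \<ge> 1" using dist_facts(2)[OF s n2 n3] by (simp add: c_def M_def)
  have R2: "gamr s (gyrodist s A2 P) * gyrodist s A2 P = s * sqrt ((M A2 P)^2 - 1)"
    using dist_facts(3)[OF s n2 nP] by (simp add: M_def)
  have R3: "gamr s (gyrodist s A3 P) * gyrodist s A3 P = s * sqrt ((M A3 P)^2 - 1)"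
    using dist_facts(3)[OF s n3 nP] by (simp add: M_def)
  have e1: "C1^2 - 1 = 2 * \<alpha> * \<beta> * (1 - c)"
    unfolding C1e using PP by (simp add: algebra_simps power2_eq_square)
  have e2: "(M A2 P)^2 - 1 = \<beta>^2 * (c^2 - 1)"
    unfolding C2 using PP by (simp add: algebra_simps power2_eq_square)
  have e3: "(M A3 P)^2 - 1 = \<alpha>^2 * (c^2 - 1)"
    unfolding C3 using PP by (simp add: algebra_simps power2_eq_square)
  have ab: "\<alpha> * \<beta> * (1 - c) = \<bar>\<alpha> * \<beta>\<bar> * (c - 1)"
  proof (cases "c = 1")
    case True thus ?thesis by simp
  next
    case False
    hence cg: "c > 1" using c1 by simp
    have "C1^2 \<ge> 1" using C1ge by (simp add: one_le_power)
    hence "2 * \<alpha> * \<beta> * (1 - c) \<ge> 0" using e1 by simp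
    hence "\<alpha> * \<beta> \<le> 0"
    proof (rule contrapos_pp)
      assume "\<not> \<alpha> * \<beta> \<le> 0"
      hence "2 * \<alpha> * \<beta> > 0" by simp
      moreover have "1 - c < 0" using cg by simp
      ultimately have "2 * \<alpha> * \<beta> * (1 - c) < 0" by (rule mult_pos_neg)
      thus "\<not> 2 * \<alpha> * \<beta> * (1 - c) \<ge> 0" by simp
    qed
    thus ?thesis by (simp add: algebra_simps)
  qed
  have sq: "sqrt ((M A2 P)^2 - 1) * sqrt ((M A3 P)^2 - 1) = \<bar>\<alpha> * \<beta>\<bar> * (c^2 - 1)"
  proof -
    have "sqrt ((M A2 P)^2 - 1) * sqrt ((M A3 P)^2 - 1) = sqrt ((\<alpha> * \<beta> * (c^2 - 1))^2)"
      unfolding e2 e3 real_sqrt_mult[symmetric] by (simp add: algebra_simps power2_eq_square)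
    also have "\<dots> = \<bar>\<alpha> * \<beta>\<bar> * (c^2 - 1)" using c1 by (simp add: abs_mult one_le_power)
    finally show ?thesis .
  qed
  have cp: "c + 1 \<noteq> 0" using c1 by simp
  have "2 / (c + 1) * (s * sqrt ((M A2 P)^2 - 1)) * (s * sqrt ((M A3 P)^2 - 1))
        = 2 / (c + 1) * s^2 * (sqrt ((M A2 P)^2 - 1) * sqrt ((M A3 P)^2 - 1))"
    by (simp add: algebra_simps power2_eq_square)
  also have "\<dots> = 2 / (c + 1) * s^2 * (\<bar>\<alpha> * \<beta>\<bar> * ((c - 1) * (c + 1)))"
    unfolding sq by (simp add: algebra_simps power2_eq_square)
  also have "\<dots> = 2 * s^2 * (\<bar>\<alpha> * \<beta>\<bar> * (c - 1))" using cp by (simp add: field_simps)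
  also have "\<dots> = s^2 * (C1^2 - 1)" unfolding e1 ab[symmetric] by simp
  finally show ?thesis unfolding LHS ceq R2 R3 by simp
qed

end
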